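(* Suppose $\mathbf{v}_1(0),\dots,\mathbf{v}_m(0)$ are generated i.i.d. from $N(0,\alpha^2\mathbf{I})$, and that for each $k$, $\|\mathbf{v}_k(t)-\mathbf{v}_k(0)\|_2\le\tilde R_v:=\frac{\sqrt{2\pi}\,\alpha\mu_0}{8n(m/\delta)^{1/d}}$. Then with probability at least $1-\delta$, $\|\mathbf{G}(t)-\mathbf{G}(0)\|_2\le\frac{\mu_0}{4}$.
   Context: Data $\mathbf{x}_1,\dots,\mathbf{x}_n\in\mathbb{R}^d$ with $\|\mathbf{x}_i\|_2\le1$ and $\mathbf{x}_i\ne\beta\mathbf{x}_j$ for $i\ne j$, $\beta\ne0$. The vectors $\mathbf{v}_k(t)$ are the first-layer parameters at time/iteration $t$ of weight-normalized training (gradient flow or gradient descent) of $f(\mathbf{x})=\frac{1}{\sqrt m}\sum_kc_k\sigma(g_k\mathbf{v}_k^\top\mathbf{x}/\|\mathbf{v}_k\|_2)$ on the square loss, started from $\mathbf{v}_k(0)\sim N(0,\alpha^2\mathbf{I})$, $c_k$ uniform on $\{-1,1\}$, $g_k(0)=\|\mathbf{v}_k(0)\|_2/\alpha$; $\sigma(s)=\max\{s,0\}$. $\mathbf{G}_{ij}(t)=\frac1m\sum_k\sigma(\mathbf{v}_k(t)^\top\mathbf{x}_i)\sigma(\mathbf{v}_k(t)^\top\mathbf{x}_j)/\|\mathbf{v}_k(t)\|_2^2$. $\mu_0=\lambda_{\min}(\mathbf{G}^\infty)$ with $\mathbf{G}^\infty_{ij}=\mathbb{E}_{\mathbf{v}\sim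 N(0,\alpha^2\mathbf{I})}\langle\mathbf{x}_i^{\mathbf{v}},\mathbf{x}_j^{\mathbf{v}}\rangle\mathbb{1}\{\mathbf{v}^\top\mathbf{x}_i\ge0\}\mathbb{1}\{\mathbf{v}^\top\mathbf{x}_j\ge0\}$, $\mathbf{x}^{\mathbf{v}}=\mathbf{v}\mathbf{v}^\top\mathbf{x}/\|\mathbf{v}\|_2^2$. *)

theory Defs
  imports "HOL-Probability.Probability"
begin

definition relu :: "real \<Rightarrow> real" where
  "relu s = max s 0"

definition gauss_iso :: "real \<Rightarrow> ('a::euclidean_space) measure" where
  "gauss_iso \<alpha> = density lborel (\<lambda>v. ennreal (\<Prod>b\<in>Basis. normal_density 0 \<alpha> (v \<bullet> b)))"

definition gram_G :: "nat \<Rightarrow> ('n::finite \<Rightarrow> real^'d) \<Rightarrow> (nat \<Rightarrow> real^'d) \<Rightarrow> real^'n^'n" where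
  "gram_G m x V = (\<chi> i j. (1 / real m) *
      (\<Sum>k<m. relu (V k \<bullet> x i) * relu (V k \<bullet> x j) / (norm (V k))\<^sup>2))"

definition proj_dir :: "real^'d \<Rightarrow> real^'d \<Rightarrow> real^'d" where
  "proj_dir v y = ((v \<bullet> y) / (norm v)\<^sup>2) *\<^sub>R v"

definition gram_inf :: "real \<Rightarrow> ('n::finite \<Rightarrow> real^'d) \<Rightarrow> real^'n^'n" where
  "gram_inf \<alpha> x = (\<chi> i j. integral\<^sup>L (gauss_iso \<alpha>)
      (\<lambda>v. (proj_dir v (x i) \<bullet> proj_dir v (x j)) *
           (if v \<bullet> x i \<ge> 0 then 1 else 0) * (if v \<bullet> x j \<ge> 0 then 1 else 0)))"

definition lambda_min :: "real^'n^'n \<Rightarrow> real" where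
  "lambda_min A = Min {c. \<exists>u. u \<noteq> 0 \<and> A *v u = c *\<^sub>R u}"

definition spec_norm :: "real^'n^'m \<Rightarrow> real" where
  "spec_norm A = onorm (\<lambda>u. A *v u)"

end

theory Submission
  imports Defs
begin


lemma gauss_prob: assumes "\<alpha> > 0" shows "prob_space (gauss_iso \<alpha> :: ('a::euclidean_space) measure)"
proof
  have "emeasure (gauss_iso \<alpha> :: 'a measure) (space (gauss_iso \<alpha>)) =
     (\<integral>\<^sup>+(v::'a). ennreal (\<Prod>b\<in>Basis. (normal_density 0 \<alpha> (v \<bullet> b))) \<partial>lborel)"
    unfolding gauss_iso_def
    by (simp add: emeasure_density)
  also have "\<dots> = (\<integral>\<^sup>+(v::'a). (\<Prod>b\<in>Basis. ennreal (normal_density 0 \<alpha> (v \<bullet> b))) \<partial>lborel)"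
    by (simp add: prod_ennreal)
  also have "\<dots> = (\<Prod>b\<in>(Basis::'a set). (\<integral>\<^sup>+x. ennreal (normal_density 0 \<alpha> x) \<partial>lborel))"
    by (rule nn_integral_lborel_prod) auto
  also have "\<dots> = 1"
  proof -
    have "(\<integral>\<^sup>+x. ennreal (normal_density 0 \<alpha> x) \<partial>lborel) = ennreal (integral\<^sup>L lborel (normal_density 0 \<alpha>))"
      by (rule nn_integral_eq_integral) (use integrable_normal_density[OF assms] in auto)
    also have "integral\<^sup>L lborel (normal_density 0 \<alpha>) = 1" using integral_normal_density[OF assms] by simp
    finally have "(\<integral>\<^sup>+x. ennreal (normal_density 0 \<alpha> x) \<partial>lborel) = 1" by simp
    then show ?thesis by simp
  qed
  finally show "emeasure (gauss_iso \<alpha> :: 'a measure) (space (gauss_iso \<alpha>)) = 1" .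
qed

lemma One_inner: "b \<in> Basis \<Longrightarrow> (\<Sum>(Basis::'a::euclidean_space set)) \<bullet> b = 1"
  by (simp add: inner_sum_left inner_Basis)

lemma gauss_small: assumes "\<alpha> > 0" "\<rho> > 0"
  shows "measure (gauss_iso \<alpha> :: ('a::euclidean_space) measure) {v. norm v < \<rho>}
     \<le> (2 * \<rho> / (sqrt (2*pi) * \<alpha>)) ^ DIM('a)"
proof -
  let ?c = "1 / (sqrt (2*pi) * \<alpha>)"
  have nd: "normal_density 0 \<alpha> y \<le> ?c" for y
  proof -
    have "exp (-(y - 0)\<^sup>2/ (2 * \<alpha>\<^sup>2)) \<le> 1" by simp
    moreover have "sqrt (2 * pi * \<alpha>\<^sup>2) = sqrt (2*pi) * \<alpha>"
      using assms by (simp add: real_sqrt_mult)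
    ultimately show ?thesis using assms unfolding normal_density_def
      by (simp add: divide_right_mono)
  qed
  have pb: "(\<Prod>b\<in>Basis. normal_density 0 \<alpha> (v \<bullet> b)) \<le> ?c ^ DIM('a)" for v :: 'a
    using prod_mono[of "Basis::'a set" "\<lambda>b. normal_density 0 \<alpha> (v \<bullet> b)" "\<lambda>_. ?c"] nd
    by simp
  let ?B = "cbox (-\<rho> *\<^sub>R One) (\<rho> *\<^sub>R One) :: 'a set"
  have sub: "{v. norm v < \<rho>} \<subseteq> ?B"
  proof
    fix v :: 'a assume "v \<in> {v. norm v < \<rho>}"
    then have "\<bar>v \<bullet> b\<bar> \<le> \<rho>" if "b \<in> Basis" for b
      using Basis_le_norm[OF that, of v] by simp
    then show "v \<in> ?B" unfolding mem_box by (simp add: One_inner abs_le_iff) (meson minus_le_iff)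
  qed
  have meas: "{v::'a. norm v < \<rho>} \<in> sets borel" by measurable
  have "emeasure (gauss_iso \<alpha> :: 'a measure) {v. norm v < \<rho>} =
     (\<integral>\<^sup>+(v::'a). ennreal (\<Prod>b\<in>Basis. normal_density 0 \<alpha> (v \<bullet> b)) * indicator {v. norm v < \<rho>} v \<partial>lborel)"
    unfolding gauss_iso_def using meas by (simp add: emeasure_density)
  also have "\<dots> \<le> (\<integral>\<^sup>+(v::'a). ennreal (?c ^ DIM('a)) * indicator ?B v \<partial>lborel)"
  proof (rule nn_integral_mono)
    fix v :: 'a
    show "ennreal (\<Prod>b\<in>Basis. normal_density 0 \<alpha> (v \<bullet> b)) * indicator {v. norm v < \<rho>} v
       \<le> ennreal (?c ^ DIM('a)) * indicator ?B v"
    proof (cases "v \<in> {v. norm v < \<rho>}")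
      case True
      then have "v \<in> ?B" using sub by blast
      then show ?thesis using True ennreal_leI[OF pb[of v]] by simp
    next
      case False then show ?thesis by simp
    qed
  qed
  also have "\<dots> = ennreal (?c ^ DIM('a)) * emeasure lborel ?B"
    by (simp add: nn_integral_cmult_indicator)
  also have "emeasure lborel ?B = ennreal ((2*\<rho>) ^ DIM('a))"
  proof -
    have "\<forall>b\<in>(Basis::'a set). (\<rho> *\<^sub>R One - (-\<rho> *\<^sub>R One)) \<bullet> b = 2*\<rho>"
    proof
      fix b :: 'a assume b: "b \<in> Basis"
      have "(\<Sum>(Basis::'a set)) \<bullet> b = (1::real)" using b by (simp add: inner_sum_left inner_Basis)
      then show "(\<rho> *\<^sub>R One - (-\<rho> *\<^sub>R One)) \<bullet> b = 2*\<rho>"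
        by (simp add: inner_diff_left inner_add_left)
    qed
    then have "(\<Prod>b\<in>(Basis::'a set). (\<rho> *\<^sub>R One - (-\<rho> *\<^sub>R One)) \<bullet> b) = (2*\<rho>) ^ DIM('a)"
      by (simp add: prod.cong)
    moreover have "emeasure lborel ?B = (\<Prod>b\<in>(Basis::'a set). (\<rho> *\<^sub>R One - (-\<rho> *\<^sub>R One)) \<bullet> b)"
      by (rule emeasure_lborel_cbox) (use assms in \<open>simp add: inner_sum_left inner_Basis\<close>)
    ultimately show ?thesis by simp
  qed
  also have "ennreal (?c ^ DIM('a)) * ennreal ((2*\<rho>) ^ DIM('a)) = ennreal ((2 * \<rho> / (sqrt (2*pi) * \<alpha>)) ^ DIM('a))"
  proof -
    have "?c ^ DIM('a) * (2*\<rho>) ^ DIM('a) = (?c * (2*\<rho>)) ^ DIM('a)"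
      by (rule power_mult_distrib[symmetric])
    also have "?c * (2*\<rho>) = 2 * \<rho> / (sqrt (2*pi) * \<alpha>)" by simp
    finally show ?thesis using assms by (simp add: ennreal_mult[symmetric])
  qed
  finally have "emeasure (gauss_iso \<alpha> :: 'a measure) {v. norm v < \<rho>} \<le> ennreal ((2 * \<rho> / (sqrt (2*pi) * \<alpha>)) ^ DIM('a))" .
  then show ?thesis
    using assms by (simp add: measure_def enn2real_leI)
qed
lemma prob_part:
  fixes \<alpha> \<rho> \<delta> :: real and m :: nat
  assumes ap: "\<alpha> > 0" and mp: "m > 0"
    and bnd: "measure (gauss_iso \<alpha> :: ('a::euclidean_space) measure) {v. norm v < \<rho>} \<le> \<delta> / m"
  shows "{V\<in>space (PiM {..<m} (\<lambda>_. gauss_iso \<alpha> :: 'a measure)). \<forall>k<m. \<rho> \<le> norm (V k)}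
            \<in> sets (PiM {..<m} (\<lambda>_. gauss_iso \<alpha> :: 'a measure)) \<and>
         measure (PiM {..<m} (\<lambda>_. gauss_iso \<alpha> :: 'a measure))
           {V\<in>space (PiM {..<m} (\<lambda>_. gauss_iso \<alpha> :: 'a measure)). \<forall>k<m. \<rho> \<le> norm (V k)} \<ge> 1 - \<delta>"
proof -
  let ?M = "\<lambda>_::nat. gauss_iso \<alpha> :: 'a measure"
  let ?P = "PiM {..<m} ?M"
  let ?S = "space ?P"
  have ps: "prob_space (gauss_iso \<alpha> :: 'a measure)" by (rule gauss_prob[OF ap])
  interpret P: product_prob_space ?M "{..<m}"
    unfolding product_prob_space_def product_prob_space_axioms_def product_sigma_finite_def
    using ps prob_space_imp_sigma_finite by auto
  have setsG: "sets (gauss_iso \<alpha> :: 'a measure) = sets borel"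
    unfolding gauss_iso_def by simp
  have Bm: "{v::'a. norm v < \<rho>} \<in> sets (gauss_iso \<alpha> :: 'a measure)"
    unfolding setsG by measurable
  define E where "E k = {V\<in>?S. V k \<in> {v::'a. norm v < \<rho>}}" for k
  have Em: "E k \<in> sets ?P" if "k < m" for k
    unfolding E_def
    using measurable_sets[OF measurable_component_singleton[of k "{..<m}" ?M] Bm] that
    by (simp add: vimage_def Int_def conj_commute)
  have Eprob: "measure ?P (E k) = measure (gauss_iso \<alpha>) {v::'a. norm v < \<rho>}" if "k < m" for k
    unfolding E_def measure_def
    using P.emeasure_PiM_Collect_single[of k "{v::'a. norm v < \<rho>}"] that Bm by simp
  have Aeq: "{V\<in>?S. \<forall>k<m. \<rho> \<le> norm (V k)} = ?S - (\<Union>k\<in>{..<m}. E k)"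
    unfolding E_def by auto
  have Um: "(\<Union>k\<in>{..<m}. E k) \<in> sets ?P" using Em by auto
  have "measure ?P (\<Union>k\<in>{..<m}. E k) \<le> (\<Sum>k\<in>{..<m}. measure ?P (E k))"
    by (rule P.finite_measure_subadditive_finite) (use Em in auto)
  also have "\<dots> = (\<Sum>k\<in>{..<m}. measure (gauss_iso \<alpha>) {v::'a. norm v < \<rho>})"
    using Eprob by simp
  also have "\<dots> \<le> (\<Sum>k\<in>{..<m}. \<delta> / m)"
    by (rule sum_mono) (use bnd in simp)
  also have "\<dots> = \<delta>" using mp by simp
  finally have U: "measure ?P (\<Union>k\<in>{..<m}. E k) \<le> \<delta>" .
  have "measure ?P (?S - (\<Union>k\<in>{..<m}. E k)) = 1 - measure ?P (\<Union>k\<in>{..<m}. E k)"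
    by (rule P.prob_compl[OF Um])
  then show ?thesis using U Um Aeq by auto
qed




lemma gram3:
  fixes a b z :: "'a::real_inner"
  shows "a\<bullet>a*(b\<bullet>z)^2 + b\<bullet>b*(a\<bullet>z)^2 - 2*(a\<bullet>b)*(a\<bullet>z)*(b\<bullet>z)
           \<le> (a\<bullet>a * (b\<bullet>b) - (a\<bullet>b)^2) * (z\<bullet>z)"
proof -
  define A where "A = a\<bullet>a"
  define B where "B = b\<bullet>b"
  define g where "g = a\<bullet>b"
  define p where "p = a\<bullet>z"
  define q where "q = b\<bullet>z"
  define Z where "Z = z\<bullet>z"
  define T where "T = A*q^2 + B*p^2 - 2*g*p*q"
  define r where "r = (B*p - g*q) *\<^sub>R a + (A*q - g*p) *\<^sub>R b"
  have rz: "r\<bullet>z = T"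
    unfolding r_def T_def p_def q_def
    by (simp add: inner_add_left algebra_simps power2_eq_square)
  have rr: "r\<bullet>r = (A*B - g^2) * T"
    unfolding r_def T_def
    by (simp add: inner_add_left inner_add_right A_def B_def g_def inner_commute algebra_simps power2_eq_square)
  have cs: "(r\<bullet>z)^2 \<le> (r\<bullet>r) * Z" unfolding Z_def by (rule Cauchy_Schwarz_ineq)
  have cs2: "g^2 \<le> A*B" unfolding g_def A_def B_def by (rule Cauchy_Schwarz_ineq)
  have Z0: "Z \<ge> 0" unfolding Z_def by simp
  have "T \<le> (A*B - g^2) * Z"
  proof (cases "T \<le> 0")
    case True
    have "0 \<le> (A*B - g^2) * Z" using cs2 Z0 by (intro mult_nonneg_nonneg) auto
    then show ?thesis using True by linarith
  next
    case False
    then have "T*T \<le> T*((A*B - g^2) * Z)" using cs rz rr by (simp add: power2_eq_square algebra_simps)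
    then show ?thesis using False by (simp add: mult_le_cancel_left)
  qed
  then show ?thesis unfolding T_def A_def B_def g_def p_def q_def Z_def .
qed

lemma psd_diff:
  fixes a b z :: "'a::real_inner"
  shows "norm ((a\<bullet>z) *\<^sub>R a - (b\<bullet>z) *\<^sub>R b) \<le> max (a\<bullet>a) (b\<bullet>b) * norm z"
proof -
  define y where "y = (a\<bullet>z) *\<^sub>R a - (b\<bullet>z) *\<^sub>R b"
  define A where "A = a\<bullet>a"
  define B where "B = b\<bullet>b"
  define g where "g = a\<bullet>b"
  define p where "p = a\<bullet>z"
  define q where "q = b\<bullet>z"
  define Z where "Z = z\<bullet>z"
  have yy: "y\<bullet>y = A*p^2 + B*q^2 - 2*g*p*q"
    unfolding y_def A_def B_def g_def p_def q_def
    by (simp add: inner_diff_left inner_diff_right inner_commute[of b a] power2_eq_square) (simp add: algebra_simps)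
  have G: "A*q^2 + B*p^2 - 2*g*p*q \<le> (A*B - g^2) * Z"
    unfolding A_def B_def g_def p_def q_def Z_def by (rule gram3)
  have cp: "p^2 \<le> A*Z" unfolding p_def A_def Z_def by (rule Cauchy_Schwarz_ineq)
  have cq: "q^2 \<le> B*Z" unfolding q_def B_def Z_def by (rule Cauchy_Schwarz_ineq)
  have A0: "A \<ge> 0" "B \<ge> 0" "Z \<ge> 0" unfolding A_def B_def Z_def by auto
  have g2: "g^2 \<ge> 0" by simp
  have "y\<bullet>y \<le> (max A B)^2 * Z"
  proof (cases "A \<ge> B")
    case True
    have "(A-B)*(p^2 - q^2) = A*p^2 - A*q^2 - B*p^2 + B*q^2" by (simp add: algebra_simps)
    then have "y\<bullet>y \<le> (A*B - g^2)*Z + (A-B)*(p^2 - q^2)" using yy G by linarith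
    also have "\<dots> \<le> A*B*Z + (A-B)*(A*Z)"
    proof -
      have "(A-B)*(p^2-q^2) \<le> (A-B)*(A*Z)" using True cp zero_le_power2[of q] by (intro mult_left_mono) linarith+
      moreover have "g^2*Z \<ge> 0" using A0 by simp
      moreover have "(A*B - g^2)*Z = A*B*Z - g^2*Z" by (simp add: algebra_simps)
      ultimately show ?thesis by linarith
    qed
    also have "\<dots> = (max A B)^2 * Z" using True by (simp add: power2_eq_square algebra_simps)
    finally show ?thesis .
  next
    case False
    have "(B-A)*(q^2 - p^2) = A*p^2 - A*q^2 - B*p^2 + B*q^2" by (simp add: algebra_simps)
    then have "y\<bullet>y \<le> (A*B - g^2)*Z + (B-A)*(q^2 - p^2)" using yy G by linarith
    also have "\<dots> \<le> A*B*Z + (B-A)*(B*Z)"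
    proof -
      have "(B-A)*(q^2-p^2) \<le> (B-A)*(B*Z)" using False cq zero_le_power2[of p] by (intro mult_left_mono) linarith+
      moreover have "g^2*Z \<ge> 0" using A0 by simp
      moreover have "(A*B - g^2)*Z = A*B*Z - g^2*Z" by (simp add: algebra_simps)
      ultimately show ?thesis by linarith
    qed
    also have "\<dots> = (max A B)^2 * Z" using False by (simp add: power2_eq_square algebra_simps)
    finally show ?thesis .
  qed
  then have "(norm y)^2 \<le> (max A B * norm z)^2"
    by (simp add: power2_norm_eq_inner power_mult_distrib Z_def)
  then have "norm y \<le> max A B * norm z"
    by (rule power2_le_imp_le) (use A0 in simp)
  then show ?thesis unfolding y_def A_def B_def .
qed

lemma pq_diff:
  fixes a b z :: "'a::real_inner"
  shows "norm ((a\<bullet>z) *\<^sub>R a - (b\<bullet>z) *\<^sub>R b) \<le> norm (a-b) * norm (a+b) * norm z"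
proof -
  have eq0: "((a+b)\<bullet>z) *\<^sub>R (a-b) + ((a-b)\<bullet>z) *\<^sub>R (a+b) = 2 *\<^sub>R ((a\<bullet>z) *\<^sub>R a - (b\<bullet>z) *\<^sub>R b)"
    by (simp add: inner_add_left inner_diff_left scaleR_left_distrib scaleR_right_distrib scaleR_left_diff_distrib scaleR_right_diff_distrib scaleR_2) (simp only: scaleR_2[symmetric] scaleR_right_diff_distrib scaleR_scaleR)
  have eq: "(a\<bullet>z) *\<^sub>R a - (b\<bullet>z) *\<^sub>R b = (1/2) *\<^sub>R (((a+b)\<bullet>z) *\<^sub>R (a-b) + ((a-b)\<bullet>z) *\<^sub>R (a+b))"
    unfolding eq0 by simp
  have "norm (((a+b)\<bullet>z) *\<^sub>R (a-b) + ((a-b)\<bullet>z) *\<^sub>R (a+b))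
        \<le> \<bar>(a+b)\<bullet>z\<bar> * norm (a-b) + \<bar>(a-b)\<bullet>z\<bar> * norm (a+b)"
    by (rule order_trans[OF norm_triangle_ineq]) simp
  also have "\<dots> \<le> (norm (a+b) * norm z) * norm (a-b) + (norm (a-b) * norm z) * norm (a+b)"
    by (intro add_mono mult_right_mono Cauchy_Schwarz_ineq2) auto
  finally have X: "norm (((a+b)\<bullet>z) *\<^sub>R (a-b) + ((a-b)\<bullet>z) *\<^sub>R (a+b)) \<le> 2 * (norm (a-b) * norm (a+b) * norm z)"
    by (simp add: algebra_simps)
  have "norm ((a\<bullet>z) *\<^sub>R a - (b\<bullet>z) *\<^sub>R b) = (1/2) * norm (((a+b)\<bullet>z) *\<^sub>R (a-b) + ((a-b)\<bullet>z) *\<^sub>R (a+b))"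
  proof -
    have "norm ((1/2::real) *\<^sub>R (((a+b)\<bullet>z) *\<^sub>R (a-b) + ((a-b)\<bullet>z) *\<^sub>R (a+b)))
      = \<bar>1/2::real\<bar> * norm (((a+b)\<bullet>z) *\<^sub>R (a-b) + ((a-b)\<bullet>z) *\<^sub>R (a+b))" by (rule norm_scaleR)
    then show ?thesis by (subst eq) simp
  qed
  then show ?thesis using X by linarith
qed




definition rv :: "('n::finite \<Rightarrow> real^'d) \<Rightarrow> real^'d \<Rightarrow> real^'n" where
  "rv x v = (\<chi> i. relu (v \<bullet> x i) / norm v)"

lemma relu_nonneg: "relu s \<ge> 0" by (simp add: relu_def)
lemma relu_le_abs: "relu s \<le> \<bar>s\<bar>" by (simp add: relu_def)
lemma relu_div: "c > 0 \<Longrightarrow> relu (s / c) = relu s / c"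
  by (simp add: relu_def max_def divide_le_0_iff)

lemma rv_norm:
  fixes x :: "'n::finite \<Rightarrow> real^'d"
  assumes xn: "\<And>i. norm (x i) \<le> 1"
  shows "rv x v \<bullet> rv x v \<le> real CARD('n)"
proof -
  have c: "(rv x v $ i)^2 \<le> 1" for i
  proof (cases "v = 0")
    case True then show ?thesis by (simp add: rv_def)
  next
    case False
    then have N: "norm v > 0" by simp
    have "relu (v \<bullet> x i) \<le> norm v * norm (x i)"
      using relu_le_abs[of "v \<bullet> x i"] Cauchy_Schwarz_ineq2[of v "x i"] by linarith
    also have "\<dots> \<le> norm v" using xn[of i] N by (simp add: mult_left_le)
    finally have "relu (v \<bullet> x i) / norm v \<le> 1" using N by simp
    moreover have "relu (v \<bullet> x i) / norm v \<ge> 0" using relu_nonneg N by simp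
    ultimately show ?thesis by (simp add: rv_def power_le_one)
  qed
  have "rv x v \<bullet> rv x v = (\<Sum>i\<in>UNIV. (rv x v $ i)^2)"
    by (simp add: inner_vec_def power2_eq_square)
  also have "\<dots> \<le> (\<Sum>i\<in>(UNIV::'n set). 1)" by (rule sum_mono) (rule c)
  finally show ?thesis by simp
qed

lemma relu_pos: "s \<ge> 0 \<Longrightarrow> relu s = s" by (simp add: relu_def)
lemma relu_neg: "s \<le> 0 \<Longrightarrow> relu s = 0" by (simp add: relu_def)

lemma oneD:
  fixes \<kappa> a b :: real
  assumes k0: "0 \<le> \<kappa>" and k1: "\<kappa> \<le> 1" and h: "a^2 + b^2 - 2*\<kappa>*a*b \<le> 1 - \<kappa>^2"
  shows "(relu a)^2 + (relu b)^2 - 2*\<kappa>*relu a*relu b \<le> 1 - \<kappa>^2"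
proof -
  have kk: "\<kappa>^2 \<le> 1" using k0 k1 by (simp add: power_le_one)
  consider "a \<ge> 0" "b \<ge> 0" | "a \<ge> 0" "b \<le> 0" | "a \<le> 0" "b \<ge> 0" | "a \<le> 0" "b \<le> 0" by linarith
  then show ?thesis
  proof cases
    case 1 then show ?thesis using h by (simp add: relu_pos)
  next
    case 2
    have "0 \<le> \<kappa>*(a*(-b))" using 2 k0 by (intro mult_nonneg_nonneg) auto
    then have "0 \<le> -2*\<kappa>*a*b" by (simp add: algebra_simps)
    moreover have "b^2 \<ge> 0" by simp
    ultimately have "a^2 \<le> 1 - \<kappa>^2" using h by linarith
    then show ?thesis using 2 by (simp add: relu_pos relu_neg)
  next
    case 3
    have "0 \<le> \<kappa>*((-a)*b)" using 3 k0 by (intro mult_nonneg_nonneg) auto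
    then have "0 \<le> -2*\<kappa>*a*b" by (simp add: algebra_simps)
    moreover have "a^2 \<ge> 0" by simp
    ultimately have "b^2 \<le> 1 - \<kappa>^2" using h by linarith
    then show ?thesis using 3 by (simp add: relu_pos relu_neg)
  next
    case 4 then show ?thesis using kk by (simp add: relu_neg)
  qed
qed




lemma rv_unit:
  fixes x :: "'n::finite \<Rightarrow> real^'d"
  assumes "v \<noteq> 0"
  shows "rv x v $ i = relu (((1/norm v) *\<^sub>R v) \<bullet> x i)"
  using assms by (simp add: rv_def relu_div[symmetric])

lemma sumbound:
  fixes x :: "'n::finite \<Rightarrow> real^'d"
  assumes xn: "\<And>i. norm (x i) \<le> 1"
    and v0: "v \<noteq> 0" and v1: "v' \<noteq> 0"
    and kdef: "\<kappa> = (v \<bullet> v') / (norm v * norm v')" and k0: "0 \<le> \<kappa>"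
  shows "(\<Sum>i\<in>UNIV. (rv x v $ i)^2 + (rv x v' $ i)^2 - 2*\<kappa>*(rv x v $ i)*(rv x v' $ i))
          \<le> real CARD('n) * (1 - \<kappa>^2)"
proof -
  define u where "u = (1/norm v) *\<^sub>R v"
  define u' where "u' = (1/norm v') *\<^sub>R v'"
  have uu: "u \<bullet> u = 1" using v0 unfolding u_def by (simp add: power2_norm_eq_inner[symmetric] power2_eq_square)
  have uu': "u' \<bullet> u' = 1" using v1 unfolding u'_def by (simp add: power2_norm_eq_inner[symmetric] power2_eq_square)
  have ku: "u \<bullet> u' = \<kappa>" unfolding u_def u'_def kdef by simp
  have k1: "\<kappa> \<le> 1"
  proof -
    have "\<bar>v \<bullet> v'\<bar> \<le> norm v * norm v'" by (rule Cauchy_Schwarz_ineq2)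
    then show ?thesis unfolding kdef using v0 v1 by (auto simp: divide_le_eq_1 dest: abs_le_D1)
  qed
  have kk: "\<kappa>^2 \<le> 1" using k0 k1 by (simp add: power_le_one)
  have each: "(rv x v $ i)^2 + (rv x v' $ i)^2 - 2*\<kappa>*(rv x v $ i)*(rv x v' $ i) \<le> 1 - \<kappa>^2" for i
  proof -
    have g: "u\<bullet>u*(u'\<bullet>x i)^2 + u'\<bullet>u'*(u\<bullet>x i)^2 - 2*(u\<bullet>u')*(u\<bullet>x i)*(u'\<bullet>x i)
           \<le> (u\<bullet>u * (u'\<bullet>u') - (u\<bullet>u')^2) * (x i\<bullet>x i)" by (rule gram3)
    have xx: "x i \<bullet> x i \<le> 1" using xn[of i] by (simp add: power2_norm_eq_inner[symmetric] power_le_one)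
    have "(1 - \<kappa>^2) * (x i \<bullet> x i) \<le> (1 - \<kappa>^2) * 1"
      using kk xx by (intro mult_left_mono) auto
    then have "(u\<bullet>x i)^2 + (u'\<bullet>x i)^2 - 2*\<kappa>*(u\<bullet>x i)*(u'\<bullet>x i) \<le> 1 - \<kappa>^2"
      using g uu uu' ku by simp
    from oneD[OF k0 k1 this] show ?thesis
      using rv_unit[OF v0, of x i] rv_unit[OF v1, of x i] unfolding u_def u'_def by simp
  qed
  have "(\<Sum>i\<in>UNIV. (rv x v $ i)^2 + (rv x v' $ i)^2 - 2*\<kappa>*(rv x v $ i)*(rv x v' $ i))
         \<le> (\<Sum>i\<in>(UNIV::'n set). 1 - \<kappa>^2)" by (rule sum_mono) (rule each)
  then show ?thesis by simp
qed

lemma XYbound: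
  fixes a b :: "real^'n::finite" and \<kappa> N :: real
  assumes k0: "0 \<le> \<kappa>" and k1: "\<kappa> \<le> 1" and N0: "N \<ge> 0"
    and S: "(\<Sum>i\<in>UNIV. (a $ i)^2 + (b $ i)^2 - 2*\<kappa>*(a $ i)*(b $ i)) \<le> N * (1 - \<kappa>^2)"
  shows "norm (a - b) * norm (a + b) \<le> N * sqrt (1 - \<kappa>^2)"
proof -
  define X where "X = (a-b)\<bullet>(a-b)"
  define Y where "Y = (a+b)\<bullet>(a+b)"
  have X0: "X \<ge> 0" "Y \<ge> 0" unfolding X_def Y_def by auto
  have XYe: "(1+\<kappa>)*X + (1-\<kappa>)*Y = 2*(\<Sum>i\<in>UNIV. (a $ i)^2 + (b $ i)^2 - 2*\<kappa>*(a $ i)*(b $ i))"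
    unfolding X_def Y_def inner_vec_def
    by (simp add: sum_distrib_left sum.distrib[symmetric] algebra_simps power2_eq_square)
  have L: "(1+\<kappa>)*X + (1-\<kappa>)*Y \<le> 2*N*(1-\<kappa>^2)" using XYe S by linarith
  have XY: "X*Y \<le> N^2*(1-\<kappa>^2)"
  proof (cases "\<kappa> = 1")
    case True
    then have "X = 0" using L X0 by simp
    then show ?thesis using True by simp
  next
    case False
    then have "\<kappa> < 1" using k1 by simp
    moreover have "\<kappa>^2 \<le> \<kappa>" using k0 k1 by (simp add: power2_eq_square mult_left_le_one_le)
    ultimately have kp: "0 < 1 - \<kappa>^2" by linarith
    have am: "4*((1+\<kappa>)*X)*((1-\<kappa>)*Y) \<le> ((1+\<kappa>)*X + (1-\<kappa>)*Y)^2"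
      using zero_le_power2[of "(1+\<kappa>)*X - (1-\<kappa>)*Y"] by (simp add: power2_eq_square algebra_simps)
    have l0: "0 \<le> (1+\<kappa>)*X + (1-\<kappa>)*Y" using X0 k0 k1 by simp
    have "((1+\<kappa>)*X + (1-\<kappa>)*Y)^2 \<le> (2*N*(1-\<kappa>^2))^2"
      using L l0 by (simp add: power_mono)
    then have "4*(1-\<kappa>^2)*(X*Y) \<le> 4*(1-\<kappa>^2)*(N^2*(1-\<kappa>^2))"
      using am by (simp add: power2_eq_square algebra_simps)
    then show ?thesis using kp by simp
  qed
  have "norm (a - b) * norm (a + b) = sqrt (X*Y)"
    unfolding X_def Y_def by (simp add: norm_eq_sqrt_inner real_sqrt_mult)
  also have "\<dots> \<le> sqrt (N^2*(1-\<kappa>^2))" using XY by simp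
  also have "\<dots> = N * sqrt (1-\<kappa>^2)" using N0 by (simp add: real_sqrt_mult)
  finally show ?thesis .
qed




lemma per_k:
  fixes x :: "'n::finite \<Rightarrow> real^'d" and v v' :: "real^'d" and z :: "real^'n"
  assumes xn: "\<And>i. norm (x i) \<le> 1"
    and rp: "\<rho> > 0" and rv0: "\<rho> \<le> norm v"
    and hd: "norm (v' - v) \<le> \<mu> * \<rho> / (4 * real CARD('n))"
  shows "norm ((rv x v' \<bullet> z) *\<^sub>R rv x v' - (rv x v \<bullet> z) *\<^sub>R rv x v) \<le> \<mu> / 4 * norm z"
proof -
  define n where "n = real CARD('n)"
  have n0: "n > 0" unfolding n_def by simp
  have hd': "norm (v' - v) \<le> \<mu> * \<rho> / (4 * n)" using hd unfolding n_def .
  have v0: "v \<noteq> 0" using rp rv0 by auto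
  have Np: "norm v > 0" using v0 by simp
  have hd0: "0 \<le> \<mu> * \<rho> / (4 * n)" using hd' norm_ge_zero[of "v'-v"] by linarith
  have mu0: "0 \<le> \<mu>"
  proof -
    from hd0 show ?thesis using rp n0 by (simp add: zero_le_divide_iff zero_le_mult_iff)
  qed
  show ?thesis
  proof (cases "norm (v' - v) < norm v")
    case lt: True
    have v1: "v' \<noteq> 0" using lt by auto
    define N where "N = norm v"
    define N' where "N' = norm v'"
    define d where "d = v' \<bullet> v"
    define \<kappa> where "\<kappa> = (v' \<bullet> v) / (norm v' * norm v)"
    have N'p: "N' > 0" unfolding N'_def using v1 by simp
    have Npos: "N > 0" unfolding N_def using Np .
    have dk: "d = \<kappa> * N' * N" unfolding \<kappa>_def d_def N_def N'_def using v0 v1 by simp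
    have ex: "(norm (v' - v))^2 = N'^2 - 2*d + N^2"
      unfolding N_def N'_def d_def
      by (simp add: power2_norm_eq_inner inner_diff_left inner_diff_right inner_commute[of v v'])
    have lt2: "(norm (v' - v))^2 < N^2" unfolding N_def using lt by (simp add: power_strict_mono)
    have d0: "d \<ge> 0"
    proof (rule ccontr)
      assume "\<not> d \<ge> 0"
      then have "N'^2 - 2*d + N^2 > N^2" using zero_le_power2[of N'] by linarith
      then show False using ex lt2 by linarith
    qed
    have k0: "0 \<le> \<kappa>" using d0 dk N'p Npos by (simp add: zero_le_mult_iff)
    have k1: "\<kappa> \<le> 1"
    proof -
      have "\<bar>v' \<bullet> v\<bar> \<le> norm v' * norm v" by (rule Cauchy_Schwarz_ineq2)
      then show ?thesis unfolding \<kappa>_def using v0 v1 by (auto simp: divide_le_eq_1 dest: abs_le_D1)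
    qed
    have "(1 - \<kappa>^2) * N^2 \<le> (norm (v' - v))^2"
    proof -
      have "0 \<le> (N' - \<kappa>*N)^2" by simp
      then show ?thesis unfolding ex dk by (simp add: power2_eq_square algebra_simps)
    qed
    then have "1 - \<kappa>^2 \<le> (norm (v' - v) / N)^2"
      using Npos by (simp add: power_divide pos_le_divide_eq)
    then have sq: "sqrt (1 - \<kappa>^2) \<le> norm (v' - v) / N"
      using real_sqrt_le_mono[of "1 - \<kappa>^2" "(norm (v' - v) / N)^2"] Npos by simp
    have "norm (v' - v) / N \<le> (\<mu> * \<rho> / (4 * n)) / \<rho>"
      using hd' rv0 rp Npos hd0 unfolding N_def by (intro frac_le) auto
    also have "\<dots> = \<mu> / (4*n)" using rp by simp
    finally have sq2: "sqrt (1 - \<kappa>^2) \<le> \<mu> / (4*n)" using sq by linarith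
    have S: "(\<Sum>i\<in>UNIV. (rv x v' $ i)^2 + (rv x v $ i)^2 - 2*\<kappa>*(rv x v' $ i)*(rv x v $ i))
          \<le> real CARD('n) * (1 - \<kappa>^2)"
      by (rule sumbound[OF xn v1 v0 \<kappa>_def k0])
    have XY: "norm (rv x v' - rv x v) * norm (rv x v' + rv x v) \<le> n * sqrt (1 - \<kappa>^2)"
      using XYbound[OF k0 k1 _ S] unfolding n_def by simp
    have "norm ((rv x v' \<bullet> z) *\<^sub>R rv x v' - (rv x v \<bullet> z) *\<^sub>R rv x v)
          \<le> norm (rv x v' - rv x v) * norm (rv x v' + rv x v) * norm z" by (rule pq_diff)
    also have "\<dots> \<le> n * sqrt (1 - \<kappa>^2) * norm z" using XY by (simp add: mult_right_mono)
    also have "\<dots> \<le> n * (\<mu> / (4*n)) * norm z"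
      using sq2 n0 by (intro mult_right_mono mult_left_mono) auto
    also have "\<dots> = \<mu> / 4 * norm z" using n0 by simp
    finally show ?thesis .
  next
    case ge: False
    have "\<rho> \<le> \<mu> * \<rho> / (4 * n)" using ge rv0 hd' by linarith
    then have "\<rho> * 1 \<le> \<rho> * (\<mu> / (4 * n))" by (simp add: mult.commute)
    then have "1 \<le> \<mu> / (4*n)" using rp by (simp only: mult_le_cancel_left_pos)
    then have nm: "n \<le> \<mu> / 4" using n0 by (simp add: pos_le_divide_eq)
    have "norm ((rv x v' \<bullet> z) *\<^sub>R rv x v' - (rv x v \<bullet> z) *\<^sub>R rv x v)
          \<le> max (rv x v' \<bullet> rv x v') (rv x v \<bullet> rv x v) * norm z" by (rule psd_diff)
    also have "\<dots> \<le> n * norm z"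
      using rv_norm[OF xn, where v=v] rv_norm[OF xn, where v=v'] unfolding n_def
      by (intro mult_right_mono) auto
    also have "\<dots> \<le> \<mu> / 4 * norm z" using nm by (intro mult_right_mono) auto
    finally show ?thesis .
  qed
qed




lemma gram_mult:
  fixes x :: "'n::finite \<Rightarrow> real^'d" and V :: "nat \<Rightarrow> real^'d" and z :: "real^'n"
  shows "gram_G m x V *v z = (1 / real m) *\<^sub>R (\<Sum>k<m. (rv x (V k) \<bullet> z) *\<^sub>R rv x (V k))"
proof -
  have e: "relu (V k \<bullet> x i) * relu (V k \<bullet> x j) / (norm (V k))\<^sup>2 = rv x (V k) $ i * rv x (V k) $ j"
    for k i j by (simp add: rv_def power2_eq_square)
  show ?thesis
  proof (subst vec_eq_iff, intro allI)
    fix i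
    have "(gram_G m x V *v z) $ i = (\<Sum>j\<in>UNIV. ((1 / real m) * (\<Sum>k<m. rv x (V k) $ i * rv x (V k) $ j)) * z $ j)"
      by (simp add: gram_G_def matrix_vector_mult_def e)
    also have "\<dots> = (1 / real m) * (\<Sum>k<m. (\<Sum>j\<in>UNIV. rv x (V k) $ j * z $ j) * rv x (V k) $ i)"
      by (simp add: sum_distrib_left sum_distrib_right sum.swap[of _ UNIV] mult_ac)
    also have "\<dots> = ((1 / real m) *\<^sub>R (\<Sum>k<m. (rv x (V k) \<bullet> z) *\<^sub>R rv x (V k))) $ i"
      by (simp add: inner_vec_def sum_component)
    finally show "(gram_G m x V *v z) $ i = ((1 / real m) *\<^sub>R (\<Sum>k<m. (rv x (V k) \<bullet> z) *\<^sub>R rv x (V k))) $ i" .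
  qed
qed

lemma det_part:
  fixes x :: "'n::finite \<Rightarrow> real^'d" and V0 Vt :: "nat \<Rightarrow> real^'d"
  assumes xn: "\<And>i. norm (x i) \<le> 1" and mp: "m > 0" and rp: "\<rho> > 0"
    and big: "\<forall>k<m. \<rho> \<le> norm (V0 k)"
    and close: "\<forall>k<m. norm (Vt k - V0 k) \<le> \<mu> * \<rho> / (4 * real CARD('n))"
  shows "spec_norm (gram_G m x Vt - gram_G m x V0) \<le> \<mu> / 4"
  unfolding spec_norm_def
proof (rule onorm_le)
  fix z :: "real^'n"
  have "(gram_G m x Vt - gram_G m x V0) *v z = gram_G m x Vt *v z - gram_G m x V0 *v z"
    by (rule matrix_vector_mult_diff_rdistrib)
  also have "\<dots> = (1 / real m) *\<^sub>R (\<Sum>k<m. (rv x (Vt k) \<bullet> z) *\<^sub>R rv x (Vt k) - (rv x (V0 k) \<bullet> z) *\<^sub>R rv x (V0 k))"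
    by (simp add: gram_mult sum_subtractf scaleR_diff_right)
  finally have eq: "(gram_G m x Vt - gram_G m x V0) *v z = \<dots>" .
  have "norm (\<Sum>k<m. (rv x (Vt k) \<bullet> z) *\<^sub>R rv x (Vt k) - (rv x (V0 k) \<bullet> z) *\<^sub>R rv x (V0 k))
        \<le> (\<Sum>k<m. norm ((rv x (Vt k) \<bullet> z) *\<^sub>R rv x (Vt k) - (rv x (V0 k) \<bullet> z) *\<^sub>R rv x (V0 k)))"
    by (rule norm_sum)
  also have "\<dots> \<le> (\<Sum>k<m. \<mu> / 4 * norm z)"
  proof (rule sum_mono)
    fix k assume "k \<in> {..<m}"
    then have k: "k < m" by simp
    show "norm ((rv x (Vt k) \<bullet> z) *\<^sub>R rv x (Vt k) - (rv x (V0 k) \<bullet> z) *\<^sub>R rv x (V0 k)) \<le> \<mu> / 4 * norm z"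
      by (rule per_k[OF xn rp]) (use big close k in auto)
  qed
  also have "\<dots> = real m * (\<mu> / 4 * norm z)" by simp
  finally have S: "norm (\<Sum>k<m. (rv x (Vt k) \<bullet> z) *\<^sub>R rv x (Vt k) - (rv x (V0 k) \<bullet> z) *\<^sub>R rv x (V0 k))
        \<le> real m * (\<mu> / 4 * norm z)" .
  have "norm ((gram_G m x Vt - gram_G m x V0) *v z)
        = (1 / real m) * norm (\<Sum>k<m. (rv x (Vt k) \<bullet> z) *\<^sub>R rv x (Vt k) - (rv x (V0 k) \<bullet> z) *\<^sub>R rv x (V0 k))"
    unfolding eq by simp
  also have "\<dots> \<le> (1 / real m) * (real m * (\<mu> / 4 * norm z))"
    using S by (intro mult_left_mono) auto
  also have "\<dots> = \<mu> / 4 * norm z" using mp by simp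
  finally show "norm ((gram_G m x Vt - gram_G m x V0) *v z) \<le> \<mu> / 4 * norm z" .
qed




theorem lemmaB5:
  fixes x :: "'n::finite \<Rightarrow> real^'d"
    and m :: nat and \<alpha> \<delta> :: real
  assumes x_norm: "\<And>i. norm (x i) \<le> 1"
    and x_nonpar: "\<And>i j \<beta>. i \<noteq> j \<Longrightarrow> \<beta> \<noteq> 0 \<Longrightarrow> x i \<noteq> \<beta> *\<^sub>R x j"
    and m_pos: "m > 0"
    and alpha_pos: "\<alpha> > 0"
    and delta: "0 < \<delta>" "\<delta> < 1"
  shows "\<exists>A \<in> sets (PiM {..<m} (\<lambda>_. gauss_iso \<alpha>)).
           measure (PiM {..<m} (\<lambda>_. gauss_iso \<alpha>)) A \<ge> 1 - \<delta> \<and>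
           (\<forall>V0 \<in> A. \<forall>Vt :: nat \<Rightarrow> real^'d.
              (\<forall>k<m. norm (Vt k - V0 k) \<le>
                  sqrt (2 * pi) * \<alpha> * lambda_min (gram_inf \<alpha> x) /
                  (8 * real CARD('n) * (real m / \<delta>) powr (1 / real CARD('d))))
              \<longrightarrow> spec_norm (gram_G m x Vt - gram_G m x V0) \<le> lambda_min (gram_inf \<alpha> x) / 4)"
proof -
  define \<mu> where "\<mu> = lambda_min (gram_inf \<alpha> x)"
  define T where "T = (real m / \<delta>) powr (1 / real CARD('d))"
  define \<rho> where "\<rho> = sqrt (2 * pi) * \<alpha> / (2 * T)"
  have md: "real m / \<delta> > 0" using m_pos delta by simp
  have Tp: "T > 0" unfolding T_def using md m_pos delta by simp
  have sp: "sqrt (2 * pi) > 0" by simp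
  have rp: "\<rho> > 0" unfolding \<rho>_def using Tp sp alpha_pos by simp
  have TD: "T ^ CARD('d) = real m / \<delta>"
  proof -
    have "T ^ CARD('d) = T powr (real CARD('d))" using Tp by (simp add: powr_realpow)
    also have "\<dots> = (real m / \<delta>) powr (1 / real CARD('d) * real CARD('d))"
      unfolding T_def using md by (simp add: powr_powr)
    also have "\<dots> = real m / \<delta>" using delta by simp
    finally show ?thesis .
  qed
  have q: "2 * \<rho> / (sqrt (2*pi) * \<alpha>) = 1 / T"
    unfolding \<rho>_def using sp alpha_pos Tp by (simp add: field_simps)
  have "measure (gauss_iso \<alpha> :: (real^'d) measure) {v. norm v < \<rho>}
        \<le> (2 * \<rho> / (sqrt (2*pi) * \<alpha>)) ^ DIM(real^'d)"
    by (rule gauss_small[OF alpha_pos rp])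
  also have "\<dots> = \<delta> / real m"
    unfolding q using TD md by (simp add: power_one_over)
  finally have bnd: "measure (gauss_iso \<alpha> :: (real^'d) measure) {v. norm v < \<rho>} \<le> \<delta> / real m" .
  note PP = prob_part[OF alpha_pos m_pos bnd]
  let ?A = "{V\<in>space (PiM {..<m} (\<lambda>_. gauss_iso \<alpha> :: (real^'d) measure)). \<forall>k<m. \<rho> \<le> norm (V k)}"
  have Req: "sqrt (2 * pi) * \<alpha> * \<mu> / (8 * real CARD('n) * T) = \<mu> * \<rho> / (4 * real CARD('n))"
    unfolding \<rho>_def using Tp by (simp add: divide_simps)
  show ?thesis
  proof (rule bexI[of _ ?A], intro conjI ballI allI impI)
    show "?A \<in> sets (PiM {..<m} (\<lambda>_. gauss_iso \<alpha>))" by (rule PP[THEN conjunct1])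
    show "measure (PiM {..<m} (\<lambda>_. gauss_iso \<alpha>)) ?A \<ge> 1 - \<delta>" by (rule PP[THEN conjunct2])
    fix V0 Vt :: "nat \<Rightarrow> real^'d"
    assume V0: "V0 \<in> ?A"
    assume cl: "\<forall>k<m. norm (Vt k - V0 k) \<le>
                  sqrt (2 * pi) * \<alpha> * lambda_min (gram_inf \<alpha> x) /
                  (8 * real CARD('n) * (real m / \<delta>) powr (1 / real CARD('d)))"
    have Req': "sqrt (2 * pi) * \<alpha> * lambda_min (gram_inf \<alpha> x) /
                  (8 * real CARD('n) * (real m / \<delta>) powr (1 / real CARD('d)))
           = lambda_min (gram_inf \<alpha> x) * \<rho> / (4 * real CARD('n))"
      using Req unfolding \<mu>_def T_def .
    have cl': "\<forall>k<m. norm (Vt k - V0 k) \<le> lambda_min (gram_inf \<alpha> x) * \<rho> / (4 * real CARD('n))"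
      using cl unfolding Req' .
    have big: "\<forall>k<m. \<rho> \<le> norm (V0 k)" using V0 by blast
    show "spec_norm (gram_G m x Vt - gram_G m x V0) \<le> lambda_min (gram_inf \<alpha> x) / 4"
      by (rule det_part[OF x_norm m_pos rp big cl'])
  qed
qed


end
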